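(* The class of graphs isomorphic to $KB(G)$ for some $K_3$-free graph $G$ is a proper subclass of the class of graphs isomorphic to $H^2$ for some graph $H$. (In particular, the square of the net graph is not isomorphic to $KB(G)$ for any $K_3$-free graph $G$.)
   Context: All graphs are finite and simple. A biclique of a graph $G$ is a set $P\subseteq V(G)$ such that the induced subgraph $G[P]$ is a complete bipartite graph with both parts nonempty, and $P$ is inclusion-maximal with this property. The biclique graph $KB(G)$ has the set of bicliques of $G$ as vertex set, two distinct bicliques being adjacent iff they intersect. For a graph $H$, the square $H^2$ has vertex set $V(H)$, two distinct vertices being adjacent iff their distance in $H$ is at most $2$. The net is the graph on six vertices $x_1,x_2,x_3,s_1,s_2,s_3$ whose edges are $x_1x_2,x_2x_3,x_1x_3,x_1s_1,x_2s_2,x_3s_3$. *)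

theory Defs
  imports Main
begin

type_synonym 'a graph = "'a set \<times> ('a \<Rightarrow> 'a \<Rightarrow> bool)"

definition is_graph :: "'a graph \<Rightarrow> bool" where
  "is_graph G \<longleftrightarrow> finite (fst G) \<and>
     (\<forall>x y. snd G x y \<longrightarrow> x \<in> fst G \<and> y \<in> fst G \<and> x \<noteq> y \<and> snd G y x)"

definition triangle_free :: "'a graph \<Rightarrow> bool" where
  "triangle_free G \<longleftrightarrow> \<not> (\<exists>x y z. snd G x y \<and> snd G y z \<and> snd G x z)"

definition induces_complete_bipartite :: "'a graph \<Rightarrow> 'a set \<Rightarrow> bool" where
  "induces_complete_bipartite G P \<longleftrightarrow> P \<subseteq> fst G \<and>
     (\<exists>A B. A \<noteq> {} \<and> B \<noteq> {} \<and> A \<inter> B = {} \<and> A \<union> B = P \<and>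
        (\<forall>x\<in>A. \<forall>y\<in>B. snd G x y) \<and>
        (\<forall>x\<in>A. \<forall>y\<in>A. \<not> snd G x y) \<and>
        (\<forall>x\<in>B. \<forall>y\<in>B. \<not> snd G x y))"

definition biclique :: "'a graph \<Rightarrow> 'a set \<Rightarrow> bool" where
  "biclique G P \<longleftrightarrow> induces_complete_bipartite G P \<and>
     (\<forall>Q. induces_complete_bipartite G Q \<and> P \<subseteq> Q \<longrightarrow> Q = P)"

definition KB :: "'a graph \<Rightarrow> 'a set graph" where
  "KB G = ({P. biclique G P}, (\<lambda>P Q. biclique G P \<and> biclique G Q \<and> P \<noteq> Q \<and> P \<inter> Q \<noteq> {}))"

definition graph_square :: "'a graph \<Rightarrow> 'a graph" where
  "graph_square H = (fst H, (\<lambda>x y. x \<in> fst H \<and> y \<in> fst H \<and> x \<noteq> y \<and>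
      (snd H x y \<or> (\<exists>z \<in> fst H. snd H x z \<and> snd H z y))))"

definition graph_iso :: "'a graph \<Rightarrow> 'b graph \<Rightarrow> bool" where
  "graph_iso G H \<longleftrightarrow> (\<exists>f. bij_betw f (fst G) (fst H) \<and>
     (\<forall>x\<in>fst G. \<forall>y\<in>fst G. snd G x y \<longleftrightarrow> snd H (f x) (f y)))"

text \<open>The net: x1,x2,x3 = 0,1,2 form a triangle; s_i = i+3 is pendant at x_i.\<close>
definition net :: "nat graph" where
  "net = ({0..5}, (\<lambda>u v. {u, v} \<in> {{0,1},{1,2},{0,2},{0,3},{1,4},{2,5}}))"

end

theory Submission
  imports Defs
begin


lemma ig_sym: "is_graph G \<Longrightarrow> snd G x y \<Longrightarrow> snd G y x"
  unfolding is_graph_def by blast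
lemma ig_irr: "is_graph G \<Longrightarrow> \<not> snd G x x"
  unfolding is_graph_def by blast
lemma ig_V: "is_graph G \<Longrightarrow> snd G x y \<Longrightarrow> x \<in> fst G \<and> y \<in> fst G"
  unfolding is_graph_def by blast
lemma tf_E: "triangle_free G \<Longrightarrow> snd G x y \<Longrightarrow> snd G y z \<Longrightarrow> snd G x z \<Longrightarrow> False"
  unfolding triangle_free_def by blast

lemma cb_sub: "induces_complete_bipartite G P \<Longrightarrow> P \<subseteq> fst G"
  unfolding induces_complete_bipartite_def by blast

lemma cb_parts:
  assumes g: "is_graph G" and c: "induces_complete_bipartite G P"
  shows "\<exists>A. A \<subseteq> P \<and> A \<noteq> {} \<and> P - A \<noteq> {} \<and>
     (\<forall>x\<in>P. \<forall>y\<in>P. snd G x y \<longleftrightarrow> (x \<in> A \<longleftrightarrow> y \<notin> A))"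
proof -
  from c obtain A B where AB: "A \<noteq> {}" "B \<noteq> {}" "A \<inter> B = {}" "A \<union> B = P"
      "\<forall>x\<in>A. \<forall>y\<in>B. snd G x y" "\<forall>x\<in>A. \<forall>y\<in>A. \<not> snd G x y"
        "\<forall>x\<in>B. \<forall>y\<in>B. \<not> snd G x y"
    unfolding induces_complete_bipartite_def by blast
  have PA: "P - A = B" using AB by blast
  have H: "\<forall>x\<in>P. \<forall>y\<in>P. snd G x y \<longleftrightarrow> (x \<in> A \<longleftrightarrow> y \<notin> A)"
  proof (intro ballI)
    fix x y assume x: "x \<in> P" and y: "y \<in> P"
    show "snd G x y \<longleftrightarrow> (x \<in> A \<longleftrightarrow> y \<notin> A)"
    proof (cases "x \<in> A")
      case True
      show ?thesis
      proof (cases "y \<in> A")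
        case True with \<open>x \<in> A\<close> AB(6) show ?thesis by blast
      next
        case False with y AB(4) have "y \<in> B" by blast
        with \<open>x \<in> A\<close> AB(5) False show ?thesis by blast
      qed
    next
      case False with x AB(4) have xB: "x \<in> B" by blast
      show ?thesis
      proof (cases "y \<in> A")
        case True with xB AB(5) ig_sym[OF g] False show ?thesis by blast
      next
        case False with y AB(4) have "y \<in> B" by blast
        with xB AB(7) \<open>x \<notin> A\<close> False show ?thesis by blast
      qed
    qed
  qed
  show ?thesis
    apply (rule exI[of _ A])
    apply (intro conjI)
    using AB PA H apply auto
    done
qed

lemma cb_nb:
  assumes g: "is_graph G" and c: "induces_complete_bipartite G P" and u: "u \<in> P"
  shows "\<exists>y\<in>P. snd G u y"
proof -
  obtain A where A: "A \<subseteq> P" "A \<noteq> {}" "P - A \<noteq> {}"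
     "\<forall>x\<in>P. \<forall>y\<in>P. snd G x y \<longleftrightarrow> (x \<in> A \<longleftrightarrow> y \<notin> A)"
    using cb_parts[OF g c] by blast
  show ?thesis
  proof (cases "u \<in> A")
    case True
    then obtain y where "y \<in> P - A" using A by blast
    then show ?thesis using A(4) u True by blast
  next
    case False
    then obtain y where "y \<in> A" using A by blast
    then show ?thesis using A u False by blast
  qed
qed

lemma cb_same:
  assumes g: "is_graph G" and c: "induces_complete_bipartite G P"
    and xyw: "x \<in> P" "y \<in> P" "w \<in> P" and nxy: "\<not> snd G x y"
    and xw: "snd G x w"
  shows "snd G y w"
proof -
  obtain A where A: "\<forall>x\<in>P. \<forall>y\<in>P. snd G x y \<longleftrightarrow> (x \<in> A \<longleftrightarrow> y \<notin> A)"
    using cb_parts[OF g c] by blast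
  have 1: "(x \<in> A \<longleftrightarrow> y \<in> A)" using A xyw nxy by blast
  have 2: "(x \<in> A \<longleftrightarrow> w \<notin> A)" using A xyw xw by blast
  show ?thesis using A xyw 1 2 by blast
qed

lemma cb_cover:
  assumes g: "is_graph G" and c: "induces_complete_bipartite G P"
    and xyw: "u \<in> P" "u' \<in> P" and uu: "snd G u u'" and x: "x \<in> P"
  shows "snd G x u \<or> snd G x u'"
proof -
  obtain A where A: "\<forall>x\<in>P. \<forall>y\<in>P. snd G x y \<longleftrightarrow> (x \<in> A \<longleftrightarrow> y \<notin> A)"
    using cb_parts[OF g c] by blast
  have 1: "(u \<in> A \<longleftrightarrow> u' \<notin> A)" using A xyw uu by blast
  show ?thesis using A xyw x 1 by blast
qed

lemma bic_cb: "biclique G P \<Longrightarrow> induces_complete_bipartite G P"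
  unfolding biclique_def by blast

lemma bic_nested: "biclique G P \<Longrightarrow> biclique G Q \<Longrightarrow> P \<subseteq> Q \<Longrightarrow> P = Q"
  unfolding biclique_def by blast

lemma bic_closure:
  assumes g: "is_graph G" and t: "triangle_free G" and b: "biclique G P"
    and u: "u \<in> P" and z: "z \<in> fst G" and zz: "\<forall>y\<in>P. snd G u y \<longrightarrow> snd G z y"
  shows "z \<in> P"
proof (rule ccontr)
  assume zn: "z \<notin> P"
  from b have c: "induces_complete_bipartite G P" by (rule bic_cb)
  have PV: "P \<subseteq> fst G" using cb_sub[OF c] .
  obtain A where A: "A \<subseteq> P" "A \<noteq> {}" "P - A \<noteq> {}"
     "\<forall>x\<in>P. \<forall>y\<in>P. snd G x y \<longleftrightarrow> (x \<in> A \<longleftrightarrow> y \<notin> A)"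
    using cb_parts[OF g c] by blast
  define A' where "A' = insert z {x\<in>P. \<not> snd G u x}"
  define B' where "B' = {x\<in>P. snd G u x}"
  have sym: "\<And>x y. snd G x y \<Longrightarrow> snd G y x" using ig_sym[OF g] .
  have irr: "\<And>x. \<not> snd G x x" using ig_irr[OF g] .
  obtain y0 where y0: "y0 \<in> P" "snd G u y0" using cb_nb[OF g c u] by blast
  have zB: "\<forall>y\<in>B'. snd G z y" using zz unfolding B'_def by blast
  have uA: "\<forall>x\<in>P. \<not> snd G u x \<longrightarrow> (x \<in> A \<longleftrightarrow> u \<in> A)" using A(4) u by blast
  have uB: "\<forall>x\<in>P. snd G u x \<longrightarrow> (x \<in> A \<longleftrightarrow> u \<notin> A)" using A(4) u by blast
  have AB1: "\<forall>x\<in>A'. \<forall>y\<in>B'. snd G x y"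
  proof (intro ballI)
    fix x y assume x: "x \<in> A'" and y: "y \<in> B'"
    show "snd G x y"
    proof (cases "x = z")
      case True then show ?thesis using zB y by blast
    next
      case False
      then have xP: "x \<in> P" "\<not> snd G u x" using x unfolding A'_def by auto
      have yP: "y \<in> P" "snd G u y" using y unfolding B'_def by auto
      show ?thesis using A(4) xP yP uA uB by blast
    qed
  qed
  have AA: "\<forall>x\<in>A'. \<forall>y\<in>A'. \<not> snd G x y"
  proof (intro ballI)
    fix x y assume x: "x \<in> A'" and y: "y \<in> A'"
    have zx: "\<not> snd G z w" if "w \<in> A'" for w
    proof
      assume zw: "snd G z w"
      then have "w \<noteq> z" using irr by blast
      then have wP: "w \<in> P" "\<not> snd G u w" using that unfolding A'_def by auto
      have "snd G w y0" using A(4) wP y0 uA uB by blast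
      moreover have "snd G z y0" using zz y0 by blast
      ultimately show False using tf_E[OF t] zw by blast
    qed
    show "\<not> snd G x y"
    proof (cases "x = z")
      case True then show ?thesis using zx y by blast
    next
      case False
      show ?thesis
      proof (cases "y = z")
        case True then show ?thesis using zx x sym by blast
      next
        case False
        then have yP: "y \<in> P" "\<not> snd G u y" using y unfolding A'_def by auto
        have xP: "x \<in> P" "\<not> snd G u x" using x \<open>x \<noteq> z\<close> unfolding A'_def by auto
        show ?thesis using A(4) xP yP uA by blast
      qed
    qed
  qed
  have BB: "\<forall>x\<in>B'. \<forall>y\<in>B'. \<not> snd G x y"
    unfolding B'_def using A(4) uB by blast
  have "induces_complete_bipartite G (insert z P)"
    unfolding induces_complete_bipartite_def
    apply (rule conjI)
    subgoal using PV z by blast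
    apply (rule exI[of _ A'], rule exI[of _ B'])
    apply (intro conjI)
    subgoal unfolding A'_def by blast
    subgoal unfolding B'_def using y0 by blast
    subgoal unfolding A'_def B'_def using zn by blast
    subgoal unfolding A'_def B'_def by blast
    subgoal using AB1 by blast
    subgoal using AA by blast
    subgoal using BB by blast
    done
  then have "insert z P = P" using b unfolding biclique_def by blast
  then show False using zn by blast
qed

definition nb :: "'a graph \<Rightarrow> 'a \<Rightarrow> 'a set" where "nb G v = {y. snd G v y}"
definition cn :: "'a graph \<Rightarrow> 'a set \<Rightarrow> 'a set" where
  "cn G Y = {x \<in> fst G. \<forall>y\<in>Y. snd G x y}"
definition star :: "'a graph \<Rightarrow> 'a \<Rightarrow> 'a set" where
  "star G v = nb G v \<union> cn G (nb G v)"

lemma nb_star: "nb G v \<subseteq> star G v" unfolding star_def by blast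
lemma self_star: "v \<in> fst G \<Longrightarrow> v \<in> star G v"
  unfolding star_def cn_def nb_def by blast
lemma star_mem: "w \<in> star G v \<Longrightarrow> snd G v w \<or> (\<forall>y. snd G v y \<longrightarrow> snd G w y)"
  unfolding star_def cn_def nb_def by blast
lemma adj_star: "snd G v w \<Longrightarrow> w \<in> star G v"
  unfolding star_def nb_def by blast

lemma star_biclique:
  assumes g: "is_graph G" and t: "triangle_free G" and v: "v \<in> fst G" and ne: "snd G v y0"
  shows "biclique G (star G v)"
proof -
  have sym: "\<And>x y. snd G x y \<Longrightarrow> snd G y x" using ig_sym[OF g] .
  have irr: "\<And>x. \<not> snd G x x" using ig_irr[OF g] .
  let ?A = "cn G (nb G v)" and ?B = "nb G v"
  have cb: "induces_complete_bipartite G (star G v)"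
    unfolding induces_complete_bipartite_def
    apply (rule conjI)
    subgoal unfolding star_def cn_def nb_def using ig_V[OF g] by blast
    apply (rule exI[of _ ?A], rule exI[of _ ?B])
    apply (intro conjI)
    subgoal using v unfolding cn_def nb_def by blast
    subgoal using ne unfolding nb_def by blast
    subgoal unfolding cn_def nb_def using irr by blast
    subgoal unfolding star_def by blast
    subgoal unfolding cn_def by blast
    subgoal
    proof (intro ballI notI)
      fix x y assume "x \<in> ?A" "y \<in> ?A" "snd G x y"
      then have "snd G x y0" "snd G y y0" "snd G x y" using ne unfolding cn_def nb_def by auto
      then show False using tf_E[OF t] by blast
    qed
    subgoal
    proof (intro ballI notI)
      fix x y assume "x \<in> ?B" "y \<in> ?B" "snd G x y"
      then have "snd G v x" "snd G x y" "snd G v y" unfolding nb_def by auto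
      then show False using tf_E[OF t] by blast
    qed
    done
  have max: "Q = star G v" if Q: "induces_complete_bipartite G Q" "star G v \<subseteq> Q" for Q
  proof
    show "Q \<subseteq> star G v"
    proof
      fix z assume z: "z \<in> Q"
      show "z \<in> star G v"
      proof (cases "snd G v z")
        case True then show ?thesis by (rule adj_star)
      next
        case False
        have vQ: "v \<in> Q" using Q self_star[OF v] by blast
        have "\<forall>y. snd G v y \<longrightarrow> snd G z y"
        proof (intro allI impI)
          fix y assume vy: "snd G v y"
          then have "y \<in> Q" using Q nb_star[of G v] unfolding nb_def by blast
          then show "snd G z y" using cb_same[OF g Q(1) vQ z _ False vy] by blast
        qed
        moreover have "z \<in> fst G" using cb_sub[OF Q(1)] z by blast
        ultimately show ?thesis unfolding star_def cn_def nb_def by blast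
      qed
    qed
  qed (use Q in blast)
  show ?thesis unfolding biclique_def using cb max by blast
qed

lemma bic_V: "biclique G P \<Longrightarrow> P \<subseteq> fst G"
  by (rule cb_sub[OF bic_cb])

lemma bic_nb: "is_graph G \<Longrightarrow> biclique G P \<Longrightarrow> u \<in> P \<Longrightarrow> \<exists>y\<in>P. snd G u y"
  by (rule cb_nb[OF _ bic_cb])

lemma star_bic_of:
  assumes g: "is_graph G" and t: "triangle_free G" and b: "biclique G P" and u: "u \<in> P"
  shows "biclique G (star G u)"
proof -
  obtain y where y: "snd G u y" using bic_nb[OF g b u] by blast
  have "u \<in> fst G" using bic_V[OF b] u by blast
  then show ?thesis using star_biclique[OF g t _ y] by blast
qed

lemma distD:
  assumes g: "is_graph G" and b: "biclique G P" and u: "u \<in> P" and w: "w \<in> star G u"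
  shows "P \<inter> star G w \<noteq> {}"
proof (cases "snd G u w")
  case True
  then have "u \<in> star G w" by (rule adj_star[OF ig_sym[OF g]])
  then show ?thesis using u by blast
next
  case False
  then have H: "\<forall>y. snd G u y \<longrightarrow> snd G w y" using star_mem[OF w] by blast
  obtain y where y: "y \<in> P" "snd G u y" using bic_nb[OF g b u] by blast
  then have "snd G w y" using H by blast
  then have "y \<in> star G w" by (rule adj_star)
  then show ?thesis using y by blast
qed

lemma distD2:
  assumes g: "is_graph G" and t: "triangle_free G" and bP: "biclique G P" and bQ: "biclique G Q"
    and u: "u \<in> P" and w: "w \<in> Q" and eq: "star G u = star G w"
  shows "P \<inter> Q \<noteq> {}"
proof -
  have wV: "w \<in> fst G" using bic_V[OF bQ] w by blast
  have "w \<in> star G w" using wV by (rule self_star)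
  then have wu: "w \<in> star G u" using eq by simp
  show ?thesis
  proof (cases "snd G u w")
    case True
    obtain y where y: "y \<in> P" "snd G u y" using bic_nb[OF g bP u] by blast
    have yV: "y \<in> fst G" using bic_V[OF bP] y by blast
    have "\<forall>y'\<in>Q. snd G w y' \<longrightarrow> snd G y y'"
    proof (intro ballI impI)
      fix y' assume y': "y' \<in> Q" "snd G w y'"
      show "snd G y y'"
      proof (cases "y' = u")
        case True then show ?thesis using ig_sym[OF g y(2)] by simp
      next
        case False
        have "y' \<in> star G w" using y'(2) by (rule adj_star)
        then have "y' \<in> star G u" using eq by simp
        then have "snd G u y' \<or> (\<forall>t. snd G u t \<longrightarrow> snd G y' t)" by (rule star_mem)
        moreover have "\<not> snd G u y'" using tf_E[OF t True y'(2)] by blast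
        ultimately have "snd G y' y" using y by blast
        then show ?thesis by (rule ig_sym[OF g])
      qed
    qed
    then have "y \<in> Q" by (rule bic_closure[OF g t bQ w yV])
    then show ?thesis using y by blast
  next
    case False
    then have H: "\<forall>y. snd G u y \<longrightarrow> snd G w y" using star_mem[OF wu] by blast
    have "w \<in> P" by (rule bic_closure[OF g t bP u wV]) (use H in blast)
    then show ?thesis using w by blast
  qed
qed

lemma distD3:
  assumes g: "is_graph G" and b: "biclique G R" and u: "u \<in> R" and w: "w \<in> R"
  shows "star G u \<inter> star G w \<noteq> {}"
proof (cases "snd G u w")
  case True
  have "w \<in> fst G" using bic_V[OF b] w by blast
  then have "w \<in> star G w" by (rule self_star)
  moreover have "w \<in> star G u" using True by (rule adj_star)
  ultimately show ?thesis by blast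
next
  case False
  obtain y where y: "y \<in> R" "snd G u y" using bic_nb[OF g b u] by blast
  have "snd G w y" using cb_same[OF g bic_cb[OF b] u w y(1) False y(2)] .
  then have "y \<in> star G w" by (rule adj_star)
  moreover have "y \<in> star G u" using y(2) by (rule adj_star)
  ultimately show ?thesis by blast
qed

lemma transport:
  fixes Vs :: "'x set" and K Hr :: "'x \<Rightarrow> 'x \<Rightarrow> bool"
  assumes fin: "finite Vs"
    and Hr: "\<forall>P Q. Hr P Q \<longrightarrow> P \<in> Vs \<and> Q \<in> Vs \<and> P \<noteq> Q \<and> Hr Q P"
    and K: "\<forall>P\<in>Vs. \<forall>Q\<in>Vs. K P Q \<longleftrightarrow> (P \<noteq> Q \<and> (Hr P Q \<or> (\<exists>R\<in>Vs. Hr P R \<and> Hr R Q)))"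
  shows "\<exists>H :: nat graph. is_graph H \<and> graph_iso (Vs, K) (graph_square H)"
proof -
  obtain h where h: "bij_betw h {0..<card Vs} Vs" using ex_bij_betw_nat_finite[OF fin] by blast
  define n where "n = card Vs"
  define H :: "nat graph" where "H = ({0..<n}, \<lambda>i j. i < n \<and> j < n \<and> Hr (h i) (h j))"
  have hb: "bij_betw h {0..<n} Vs" using h n_def by simp
  have gH: "is_graph H"
    unfolding is_graph_def H_def using Hr by fastforce
  define f where "f = inv_into {0..<n} h"
  have fb: "bij_betw f Vs {0..<n}" unfolding f_def by (rule bij_betw_inv_into[OF hb])
  have hf: "\<And>P. P \<in> Vs \<Longrightarrow> h (f P) = P" unfolding f_def using hb
    by (meson bij_betw_inv_into_right)
  have fV: "\<And>P. P \<in> Vs \<Longrightarrow> f P < n" using fb by (auto simp: bij_betw_def)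
  have hV: "\<And>i. i < n \<Longrightarrow> h i \<in> Vs" using hb by (auto simp: bij_betw_def)
  have ex: "(\<exists>z\<in>{0..<n}. Hr (h (f P)) (h z) \<and> Hr (h z) (h (f Q))) \<longleftrightarrow> (\<exists>R\<in>Vs. Hr P R \<and> Hr R Q)"
    if "P \<in> Vs" "Q \<in> Vs" for P Q
  proof
    assume "\<exists>z\<in>{0..<n}. Hr (h (f P)) (h z) \<and> Hr (h z) (h (f Q))"
    then obtain z where "z < n" "Hr (h (f P)) (h z)" "Hr (h z) (h (f Q))" by auto
    then show "\<exists>R\<in>Vs. Hr P R \<and> Hr R Q" using hf that hV by metis
  next
    assume "\<exists>R\<in>Vs. Hr P R \<and> Hr R Q"
    then obtain R where "R \<in> Vs" "Hr P R" "Hr R Q" by blast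
    then show "\<exists>z\<in>{0..<n}. Hr (h (f P)) (h z) \<and> Hr (h z) (h (f Q))"
      using hf that fV by (intro bexI[of _ "f R"]) auto
  qed
  have "graph_iso (Vs, K) (graph_square H)"
    unfolding graph_iso_def
  proof (intro exI[of _ f] conjI)
    show "bij_betw f (fst (Vs, K)) (fst (graph_square H))"
      using fb by (simp add: graph_square_def H_def)
    show "\<forall>x\<in>fst (Vs, K). \<forall>y\<in>fst (Vs, K). snd (Vs, K) x y = snd (graph_square H) (f x) (f y)"
    proof (intro ballI)
      fix P Q assume P: "P \<in> fst (Vs, K)" and Q: "Q \<in> fst (Vs, K)"
      then have P': "P \<in> Vs" and Q': "Q \<in> Vs" by auto
      have neq: "f P \<noteq> f Q \<longleftrightarrow> P \<noteq> Q" using hf P' Q' by metis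
      show "snd (Vs, K) P Q = snd (graph_square H) (f P) (f Q)"
        using K P' Q' fV[OF P'] fV[OF Q'] neq ex[OF P' Q'] hf[OF P'] hf[OF Q']
        by (simp add: graph_square_def H_def)
    qed
  qed
  with gH show ?thesis by blast
qed


definition Hadj :: "'a graph \<Rightarrow> 'a set \<Rightarrow> 'a set \<Rightarrow> bool" where
  "Hadj G P Q \<longleftrightarrow> biclique G P \<and> biclique G Q \<and> P \<noteq> Q \<and>
      (\<exists>v\<in>P \<inter> Q. P = star G v \<or> Q = star G v)"

lemma KB_sq_char:
  assumes g: "is_graph G" and t: "triangle_free G" and bP: "biclique G P" and bQ: "biclique G Q"
  shows "(P \<noteq> Q \<and> P \<inter> Q \<noteq> {}) \<longleftrightarrow>
     (P \<noteq> Q \<and> (Hadj G P Q \<or> (\<exists>R\<in>{P. biclique G P}. Hadj G P R \<and> Hadj G R Q)))"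
proof
  assume a: "P \<noteq> Q \<and> P \<inter> Q \<noteq> {}"
  then obtain v where v: "v \<in> P" "v \<in> Q" by blast
  have bS: "biclique G (star G v)" by (rule star_bic_of[OF g t bP v(1)])
  have vS: "v \<in> star G v" using bic_V[OF bP] v by (auto intro: self_star)
  show "P \<noteq> Q \<and> (Hadj G P Q \<or> (\<exists>R\<in>{P. biclique G P}. Hadj G P R \<and> Hadj G R Q))"
  proof (cases "P = star G v \<or> Q = star G v")
    case True
    then have "Hadj G P Q" unfolding Hadj_def using a bP bQ v by blast
    then show ?thesis using a by blast
  next
    case False
    have "Hadj G P (star G v)" unfolding Hadj_def using False bP bS v vS by blast
    moreover have "Hadj G (star G v) Q" unfolding Hadj_def using False bQ bS v vS by blast
    ultimately show ?thesis using a bS by blast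
  qed
next
  assume a: "P \<noteq> Q \<and> (Hadj G P Q \<or> (\<exists>R\<in>{P. biclique G P}. Hadj G P R \<and> Hadj G R Q))"
  show "P \<noteq> Q \<and> P \<inter> Q \<noteq> {}"
  proof (cases "Hadj G P Q")
    case True then show ?thesis using a unfolding Hadj_def by blast
  next
    case False
    then obtain R where R: "biclique G R" "Hadj G P R" "Hadj G R Q" using a by blast
    obtain v where v: "v \<in> P" "v \<in> R" "P = star G v \<or> R = star G v" using R(2) unfolding Hadj_def by blast
    obtain w where w: "w \<in> R" "w \<in> Q" "R = star G w \<or> Q = star G w" using R(3) unfolding Hadj_def by blast
    have "P \<inter> Q \<noteq> {}"
    proof (cases "R = star G v")
      case Rv: True
      show ?thesis
      proof (cases "R = star G w")
        case True
        show ?thesis by (rule distD2[OF g t bP bQ v(1) w(2)]) (use Rv True in simp)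
      next
        case False
        then have Qw: "Q = star G w" using w by blast
        have "w \<in> star G v" using w(1) Rv by simp
        from distD[OF g bP v(1) this] show ?thesis using Qw by simp
      qed
    next
      case Rv: False
      then have Pv: "P = star G v" using v by blast
      show ?thesis
      proof (cases "R = star G w")
        case True
        have "v \<in> star G w" using v(2) True by simp
        from distD[OF g bQ w(2) this] show ?thesis using Pv by blast
      next
        case False
        then have Qw: "Q = star G w" using w by blast
        from distD3[OF g R(1) v(2) w(1)] show ?thesis using Pv Qw by simp
      qed
    qed
    then show ?thesis using a by blast
  qed
qed

lemma part1:
  assumes g: "is_graph G" and t: "triangle_free G"
  shows "\<exists>H :: nat graph. is_graph H \<and> graph_iso (KB G) (graph_square H)"
proof -
  have fin: "finite {P. biclique G P}"
  proof (rule finite_subset)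
    show "{P. biclique G P} \<subseteq> Pow (fst G)" using bic_V by blast
    show "finite (Pow (fst G))" using g unfolding is_graph_def by simp
  qed
  have Hr: "\<forall>P Q. Hadj G P Q \<longrightarrow> P \<in> {P. biclique G P} \<and> Q \<in> {P. biclique G P} \<and> P \<noteq> Q \<and> Hadj G Q P"
    unfolding Hadj_def by blast
  have K: "\<forall>P\<in>{P. biclique G P}. \<forall>Q\<in>{P. biclique G P}.
     (\<lambda>P Q. biclique G P \<and> biclique G Q \<and> P \<noteq> Q \<and> P \<inter> Q \<noteq> {}) P Q \<longleftrightarrow>
     (P \<noteq> Q \<and> (Hadj G P Q \<or> (\<exists>R\<in>{P. biclique G P}. Hadj G P R \<and> Hadj G R Q)))"
    using KB_sq_char[OF g t] by auto
  show ?thesis unfolding KB_def by (rule transport[OF fin Hr K])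
qed

lemma closed_sub:
  assumes g: "is_graph G" and bP: "biclique G P" and bQ: "biclique G Q"
    and u: "u \<in> P" "u \<in> Q" and cl: "\<forall>v\<in>P. nb G v \<subseteq> P"
  shows "Q \<subseteq> P"
proof
  fix x assume x: "x \<in> Q"
  show "x \<in> P"
  proof (cases "snd G u x")
    case True then show ?thesis using cl u unfolding nb_def by blast
  next
    case False
    obtain y where y: "y \<in> Q" "snd G u y" using bic_nb[OF g bQ u(2)] by blast
    have yP: "y \<in> P" using cl u y unfolding nb_def by blast
    have "snd G x y" using cb_same[OF g bic_cb[OF bQ] u(2) x y(1) False y(2)] .
    then have "snd G y x" by (rule ig_sym[OF g])
    then show ?thesis using cl yP unfolding nb_def by blast
  qed
qed

lemma star_nb_eq:
  assumes g: "is_graph G" and n: "\<not> snd G a b" and b: "b \<in> star G a" and a: "a \<in> star G b"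
  shows "nb G a = nb G b"
proof -
  have n2: "\<not> snd G b a" using n ig_sym[OF g, of b a] by blast
  have h1: "\<forall>y. snd G a y \<longrightarrow> snd G b y" using star_mem[OF b] n by blast
  have h2: "\<forall>y. snd G b y \<longrightarrow> snd G a y" using star_mem[OF a] n2 by blast
  show ?thesis unfolding nb_def using h1 h2 by blast
qed

lemma adj_of_star:
  assumes g: "is_graph G" and "star G a \<noteq> star G b" "b \<in> star G a" "a \<in> star G b"
  shows "snd G a b"
proof (rule ccontr)
  assume "\<not> snd G a b"
  then have "nb G a = nb G b" using star_nb_eq[OF g _ assms(3,4)] by blast
  then have "star G a = star G b" unfolding star_def by simp
  then show False using assms by blast
qed

locale netctx =
  fixes G :: "'b graph" and S X :: "nat \<Rightarrow> 'b set"
  assumes g: "is_graph G" and t: "triangle_free G"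
    and bS: "\<And>i. i < 3 \<Longrightarrow> biclique G (S i)"
    and bX: "\<And>i. i < 3 \<Longrightarrow> biclique G (X i)"
    and all: "\<And>P. biclique G P \<Longrightarrow> \<exists>i<3. P = S i \<or> P = X i"
    and disj: "\<And>i j. i < 3 \<Longrightarrow> j < 3 \<Longrightarrow> i \<noteq> j \<Longrightarrow> S i \<inter> S j = {}"
    and Xmeet: "\<And>i P. i < 3 \<Longrightarrow> biclique G P \<Longrightarrow> X i \<inter> P \<noteq> {}"
    and Xne: "\<And>i j. i < 3 \<Longrightarrow> j < 3 \<Longrightarrow> X i \<noteq> S j"
    and Xd: "\<And>i j. i < 3 \<Longrightarrow> j < 3 \<Longrightarrow> i \<noteq> j \<Longrightarrow> X i \<noteq> X j"
begin

lemma ex_u: assumes i: "i < 3" shows "\<exists>u\<in>S i. star G u \<noteq> S i"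
proof (rule ccontr)
  assume na: "\<not> (\<exists>u\<in>S i. star G u \<noteq> S i)"
  have cl: "\<forall>v\<in>S i. nb G v \<subseteq> S i"
  proof
    fix v assume "v \<in> S i"
    then have "star G v = S i" using na by blast
    then show "nb G v \<subseteq> S i" using nb_star[of G v] by simp
  qed
  have b0: "biclique G (X 0)" using bX[of 0] by simp
  have "X 0 \<inter> S i \<noteq> {}" using Xmeet[of 0 "S i"] bS[OF i] by simp
  then obtain u where u: "u \<in> X 0" "u \<in> S i" by blast
  have "X 0 \<subseteq> S i" by (rule closed_sub[OF g bS[OF i] b0 u(2) u(1) cl])
  then have "X 0 = S i" by (rule bic_nested[OF b0 bS[OF i]])
  moreover have "X 0 \<noteq> S i" using Xne[of 0 i] i by simp
  ultimately show False by contradiction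
qed

definition uu :: "nat \<Rightarrow> 'b" where "uu i = (SOME u. u \<in> S i \<and> star G u \<noteq> S i)"
definition Y :: "nat \<Rightarrow> 'b set" where "Y i = star G (uu i)"

lemma uu: assumes "i < 3" shows "uu i \<in> S i" "Y i \<noteq> S i"
proof -
  have "\<exists>u. u \<in> S i \<and> star G u \<noteq> S i" using ex_u[OF assms] by blast
  then have "uu i \<in> S i \<and> star G (uu i) \<noteq> S i" unfolding uu_def by (rule someI_ex)
  then show "uu i \<in> S i" "Y i \<noteq> S i" unfolding Y_def by auto
qed

lemma bY: assumes "i < 3" shows "biclique G (Y i)"
  unfolding Y_def by (rule star_bic_of[OF g t bS[OF assms] uu(1)[OF assms]])

lemma star_not_Sj:
  assumes i: "i < 3" and j: "j < 3" and ij: "i \<noteq> j" and u: "u \<in> S i"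
  shows "star G u \<noteq> S j"
proof
  assume "star G u = S j"
  moreover have "u \<in> star G u" using bic_V[OF bS[OF i]] u by (auto intro: self_star)
  ultimately show False using disj[OF i j ij] u by blast
qed

lemma Y_X: assumes i: "i < 3" shows "\<exists>m<3. Y i = X m"
proof -
  obtain m where m: "m < 3" "Y i = S m \<or> Y i = X m" using all[OF bY[OF i]] by blast
  show ?thesis
  proof (cases "Y i = X m")
    case True then show ?thesis using m by blast
  next
    case False
    then have "Y i = S m" using m by blast
    moreover have "m \<noteq> i" using uu(2)[OF i] calculation by blast
    ultimately show ?thesis using star_not_Sj[OF i m(1) _ uu(1)[OF i]] unfolding Y_def by blast
  qed
qed

lemma Y_inj: assumes i: "i < 3" and k: "k < 3" and eq: "Y i = Y k" shows "i = k"
proof (rule ccontr)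
  assume ik: "i \<noteq> k"
  have "S i \<inter> S k \<noteq> {}"
    by (rule distD2[OF g t bS[OF i] bS[OF k] uu(1)[OF i] uu(1)[OF k]]) (use eq in \<open>simp add: Y_def\<close>)
  then show False using disj[OF i k ik] by blast
qed

lemma X_Y: assumes j: "j < 3" shows "\<exists>k<3. X j = Y k"
proof -
  have sub: "Y ` {0..<3} \<subseteq> X ` {0..<3}" using Y_X by fastforce
  have inj: "inj_on Y {0..<3}" using Y_inj unfolding inj_on_def by auto
  have c1: "card (Y ` {0..<3}) = 3" using card_image[OF inj] by simp
  have c2: "card (X ` {0..<3}) \<le> 3" using card_image_le[of "{0..<3::nat}" X] by simp
  have "Y ` {0..<3} = X ` {0..<3}"
    using card_subset_eq[OF _ sub] c1 c2 card_mono[OF _ sub] by simp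
  then have "X j \<in> Y ` {0..<3}" using j by auto
  then show ?thesis by auto
qed

lemma Ymeet: assumes k: "k < 3" and P: "biclique G P" shows "Y k \<inter> P \<noteq> {}"
  using Y_X[OF k] Xmeet P by auto

lemma P1: assumes i: "i < 3" and u: "u \<in> S i" shows "star G u = S i \<or> star G u = Y i"
proof -
  have bs: "biclique G (star G u)" by (rule star_bic_of[OF g t bS[OF i] u])
  obtain m where m: "m < 3" "star G u = S m \<or> star G u = X m" using all[OF bs] by blast
  show ?thesis
  proof (cases "star G u = S m")
    case True
    then show ?thesis using star_not_Sj[OF i m(1) _ u] by (cases "m = i") auto
  next
    case False
    then have "star G u = X m" using m by blast
    then obtain k where km: "k < 3" "star G u = Y k" using X_Y[OF m(1)] by auto
    have "S i \<inter> S k \<noteq> {}"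
      by (rule distD2[OF g t bS[OF i] bS[OF km(1)] u uu(1)[OF km(1)]]) (use km in \<open>simp add: Y_def\<close>)
    then have "k = i" using disj[OF i km(1)] by blast
    then show ?thesis using km by blast
  qed
qed

lemma P2: assumes i: "i < 3" and k: "k < 3" and ik: "i \<noteq> k" and u: "u \<in> S i" "u \<in> Y k"
  shows "star G u = Y i"
proof -
  have "star G u \<noteq> S i"
  proof
    assume su: "star G u = S i"
    have "u \<in> star G (uu k)" using u(2) unfolding Y_def .
    from distD[OF g bS[OF k] uu(1)[OF k] this] su disj[OF k i] ik show False by auto
  qed
  then show ?thesis using P1[OF i u(1)] by blast
qed

lemma P6: assumes i: "i < 3" and v: "v \<in> S i" "v' \<in> S i" and sv: "star G v = Y i" "star G v' = Y i"
  shows "nb G v = nb G v'"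
proof (cases "snd G v v'")
  case True
  have "S i \<subseteq> Y i"
  proof
    fix x assume x: "x \<in> S i"
    have "snd G x v \<or> snd G x v'" by (rule cb_cover[OF g bic_cb[OF bS[OF i]] v True x])
    then have "snd G v x \<or> snd G v' x" using ig_sym[OF g, of x v] ig_sym[OF g, of x v'] by blast
    then show "x \<in> Y i"
    proof
      assume "snd G v x" then have "x \<in> star G v" by (rule adj_star)
      then show ?thesis using sv by simp
    next
      assume "snd G v' x" then have "x \<in> star G v'" by (rule adj_star)
      then show ?thesis using sv by simp
    qed
  qed
  then have "S i = Y i" using bic_nested bS[OF i] bY[OF i] by blast
  then show ?thesis using uu(2)[OF i] by simp
next
  case False
  have vV: "v \<in> fst G" "v' \<in> fst G" using bic_V[OF bS[OF i]] v by auto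
  have "v' \<in> star G v" using self_star[OF vV(2)] sv by simp
  moreover have "v \<in> star G v'" using self_star[OF vV(1)] sv by simp
  ultimately show ?thesis using star_nb_eq[OF g False] by blast
qed

lemma pick: assumes i: "i < 3" and k: "k < 3" and ik: "i \<noteq> k"
  shows "\<exists>u. u \<in> S i \<and> u \<in> Y k \<and> star G u = Y i"
proof -
  obtain u where "u \<in> S i" "u \<in> Y k" using Ymeet[OF k bS[OF i]] by blast
  then show ?thesis using P2[OF i k ik] by blast
qed

lemma pair_adj:
  assumes i: "i < 3" and k: "k < 3" and ik: "i \<noteq> k"
    and a: "a \<in> Y k" "star G a = Y i" and b: "b \<in> Y i" "star G b = Y k"
  shows "snd G a b"
proof (rule adj_of_star[OF g])
  show "star G a \<noteq> star G b" using a b Y_inj[OF i k] ik by auto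
  show "b \<in> star G a" using a b by simp
  show "a \<in> star G b" using a b by simp
qed

theorem contra: False
proof -
  have o: "(0::nat) < 3" "(1::nat) < 3" "(2::nat) < 3" by auto
  obtain v where v: "v \<in> S 0" "v \<in> Y 1" "star G v = Y 0" using pick[of 0 1] by auto
  obtain w where w: "w \<in> S 1" "w \<in> Y 0" "star G w = Y 1" using pick[of 1 0] by auto
  obtain v' where v': "v' \<in> S 0" "v' \<in> Y 2" "star G v' = Y 0" using pick[of 0 2] by auto
  obtain z where z: "z \<in> S 2" "z \<in> Y 0" "star G z = Y 2" using pick[of 2 0] by auto
  obtain w' where w': "w' \<in> S 1" "w' \<in> Y 2" "star G w' = Y 1" using pick[of 1 2] by auto
  obtain z' where z': "z' \<in> S 2" "z' \<in> Y 1" "star G z' = Y 2" using pick[of 2 1] by auto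
  have vw: "snd G v w" using pair_adj[of 0 1 v w] v w by auto
  have v'z: "snd G v' z" using pair_adj[of 0 2 v' z] v' z by auto
  have w'z': "snd G w' z'" using pair_adj[of 1 2 w' z'] w' z' by auto
  have n1: "nb G v = nb G v'" using P6[of 0 v v'] v v' by auto
  have n2: "nb G w = nb G w'" using P6[of 1 w w'] w w' by auto
  have n3: "nb G z = nb G z'" using P6[of 2 z z'] z z' by auto
  have "snd G v' w" using vw n1 unfolding nb_def by blast
  moreover have "snd G w z'" using w'z' n2 unfolding nb_def by blast
  then have "snd G z' w" by (rule ig_sym[OF g])
  then have "snd G z w" using n3 unfolding nb_def by blast
  then have "snd G w z" by (rule ig_sym[OF g])
  ultimately show False using tf_E[OF t _ _ v'z] by blast
qed

end



lemma net_E: "snd net u v \<longleftrightarrow> (u,v) \<in> {(0,1),(1,0),(1,2),(2,1),(0,2),(2,0),(0,3),(3,0),(1,4),(4,1),(2,5),(5,2)}"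
  unfolding net_def by (auto simp: doubleton_eq_iff)

lemma net_V: "fst net = {0,1,2,3,4,5}"
  unfolding net_def by auto

lemma is_graph_net: "is_graph net"
  unfolding is_graph_def net_V net_E by auto

lemma net_sq:
  assumes "i \<in> {0..5}" "j \<in> {0..5}"
  shows "snd (graph_square net) i j \<longleftrightarrow> i \<noteq> j \<and> \<not> (3 \<le> i \<and> 3 \<le> j)"
proof -
  have "\<forall>i\<in>{0,1,2,3,4,5::nat}. \<forall>j\<in>{0,1,2,3,4,5::nat}.
     snd (graph_square net) i j \<longleftrightarrow> i \<noteq> j \<and> \<not> (3 \<le> i \<and> 3 \<le> j)"
    unfolding graph_square_def net_V snd_conv fst_conv net_E by simp
  moreover have "{0..5::nat} = {0,1,2,3,4,5}" by auto
  ultimately show ?thesis using assms by blast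
qed


lemma bic_ne: "biclique G P \<Longrightarrow> P \<noteq> {}"
  unfolding biclique_def induces_complete_bipartite_def by blast

lemma part3:
  fixes G :: "'b graph"
  assumes g: "is_graph G" and t: "triangle_free G"
  shows "\<not> graph_iso (KB G) (graph_square net)"
proof
  assume iso: "graph_iso (KB G) (graph_square net)"
  have fsq: "fst (graph_square net) = {0..5}" by (simp add: graph_square_def net_def)
  from iso obtain f where fb: "bij_betw f {P. biclique G P} {0..5}"
    and fa: "\<forall>P\<in>{P. biclique G P}. \<forall>Q\<in>{P. biclique G P}.
       (biclique G P \<and> biclique G Q \<and> P \<noteq> Q \<and> P \<inter> Q \<noteq> {}) \<longleftrightarrow> snd (graph_square net) (f P) (f Q)"
    unfolding graph_iso_def KB_def fsq fst_conv snd_conv by blast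
  define h where "h = inv_into {P. biclique G P} f"
  have hb: "bij_betw h {0..5} {P. biclique G P}" unfolding h_def by (rule bij_betw_inv_into[OF fb])
  have fh: "\<And>i. i \<in> {0..5} \<Longrightarrow> f (h i) = i" unfolding h_def
    by (rule bij_betw_inv_into_right[OF fb])
  have hf: "\<And>P. biclique G P \<Longrightarrow> h (f P) = P" unfolding h_def
    by (rule bij_betw_inv_into_left[OF fb]) simp
  have bh: "\<And>i. i \<le> 5 \<Longrightarrow> biclique G (h i)"
  proof -
    fix i :: nat assume "i \<le> 5"
    then have "i \<in> {0..5}" by simp
    from bij_betw_apply[OF hb this] show "biclique G (h i)" by simp
  qed
  have fr: "\<And>P. biclique G P \<Longrightarrow> f P \<le> 5"
  proof -
    fix P assume "biclique G P"
    then have "P \<in> {P. biclique G P}" by simp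
    from bij_betw_apply[OF fb this] show "f P \<le> 5" by simp
  qed
  have hinj: "\<And>i j. i \<le> 5 \<Longrightarrow> j \<le> 5 \<Longrightarrow> h i = h j \<Longrightarrow> i = j"
  proof -
    fix i j :: nat assume a: "i \<le> 5" "j \<le> 5" "h i = h j"
    have "f (h i) = i" using fh[of i] a(1) by simp
    moreover have "f (h j) = j" using fh[of j] a(2) by simp
    ultimately show "i = j" using a(3) by metis
  qed
  have meet: "h i \<inter> h j \<noteq> {} \<longleftrightarrow> \<not> (3 \<le> i \<and> 3 \<le> j)"
    if "i \<le> 5" "j \<le> 5" "i \<noteq> j" for i j
  proof -
    have "h i \<noteq> h j" using hinj that by blast
    moreover have "snd (graph_square net) i j \<longleftrightarrow> i \<noteq> j \<and> \<not> (3 \<le> i \<and> 3 \<le> j)"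
      using net_sq that by simp
    moreover have "(h i \<noteq> h j \<and> h i \<inter> h j \<noteq> {}) \<longleftrightarrow> snd (graph_square net) (f (h i)) (f (h j))"
      using fa bh[OF that(1)] bh[OF that(2)] by simp
    moreover have "f (h i) = i" "f (h j) = j" using fh[of i] fh[of j] that(1,2) by simp_all
    ultimately show ?thesis using that by simp
  qed
  interpret netctx G "\<lambda>i. h (i + 3)" h
  proof
    show "is_graph G" by (rule g)
    show "triangle_free G" by (rule t)
    show "\<And>i. i < 3 \<Longrightarrow> biclique G (h (i + 3))" using bh by simp
    show "\<And>i. i < 3 \<Longrightarrow> biclique G (h i)" using bh by simp
    show "\<exists>i<3. P = h (i + 3) \<or> P = h i" if P: "biclique G P" for P
    proof (cases "f P < 3")
      case True then show ?thesis using hf[OF P] by metis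
    next
      case False
      then have "f P - 3 < 3" "P = h (f P - 3 + 3)" using fr[OF P] hf[OF P] by auto
      then show ?thesis by blast
    qed
    show "h (i + 3) \<inter> h (j + 3) = {}" if "i < 3" "j < 3" "i \<noteq> j" for i j
      using meet[of "i+3" "j+3"] that by auto
    show "h i \<inter> P \<noteq> {}" if i: "i < 3" and P: "biclique G P" for i P
    proof (cases "P = h i")
      case True then show ?thesis using bic_ne[OF P] by simp
    next
      case False
      then have "f P \<noteq> i" using hf[OF P] by auto
      then show ?thesis using meet[of i "f P"] i fr[OF P] hf[OF P] by auto
    qed
    show "h i \<noteq> h (j + 3)" if "i < 3" "j < 3" for i j
      using hinj[of i "j+3"] that by auto
    show "h i \<noteq> h j" if "i < 3" "j < 3" "i \<noteq> j" for i j
      using hinj[of i j] that by auto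
  qed
  show False by (rule contra)
qed

theorem corollary2:
  shows "(\<forall>G :: 'a graph. is_graph G \<and> triangle_free G \<longrightarrow>
            (\<exists>H :: nat graph. is_graph H \<and> graph_iso (KB G) (graph_square H)))
       \<and> (\<exists>H :: nat graph. is_graph H \<and>
            (\<forall>G :: 'b graph. is_graph G \<and> triangle_free G \<longrightarrow>
               \<not> graph_iso (KB G) (graph_square H)))
       \<and> (\<forall>G :: 'b graph. is_graph G \<and> triangle_free G \<longrightarrow>
               \<not> graph_iso (KB G) (graph_square net))"
  using part1 part3 is_graph_net by blast

end
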